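(* Let $2\leq d\leq k$ be integers, $\Sigma_k=\{\sigma_1,\ldots,\sigma_k\}$, $\Sigma_d=\{\sigma_1,\ldots,\sigma_d\}$. Consider $r\geq 2$ users over $\Sigma_k$, where user 1 has confusion graph $G_1=(\Sigma_k,\{ab\mid a\in\Sigma_k,\ b\in\Sigma_k\setminus\Sigma_d,\ a\neq b\})$ and users $2,\ldots,r$ have arbitrary confusion graphs $G_2,\ldots,G_r$ on $\Sigma_k$. If $(\alpha\log_2 d,R_2,\ldots,R_r)$ with $\alpha\in[0,1]$ is a feasible rate vector, then $\sum_{i=2}^r R_i\leq(1-\alpha)\log_2 k$.
   Context: Setting: a sender broadcasts a word of length $n$ over a finite alphabet $\Sigma$ to $r$ users; user $i$ has a confusion graph $G_i$ on vertex set $\Sigma$, where $ab$ is an edge iff user $i$ cannot distinguish letters $a$ and $b$. Two words $x,y\in\Sigma^n$ are distinguishable by user $i$ if there is a coordinate $t$ with $x_t\neq y_t$ and $x_ty_t$ not an edge of $G_i$. A vector $(m_1,\ldots,m_r)$ of positive integers is feasible for length $n$ if there is a map $E:[m_1]\times\cdots\times[m_r]\to\Sigma^n$ such that for every $i$ and all tuples $a,a'$ with $a_i\neq a'_i$, $E(a)$ and $E(a')$ are distinguishable by user $i$. A rate vector $(R_1,\ldots,R_r)$ is feasible if there is a sequence of feasible vectors for lengths $n\to\infty$ with $R_i=\lim_{n\to\infty}\frac{\log_2 m_i^{(n)}}{n}$ for all $i$. *)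

theory Defs
  imports "HOL-Analysis.Analysis"
begin

definition is_graph_on :: "'a set \<Rightarrow> 'a set set \<Rightarrow> bool" where
  "is_graph_on Alph G \<longleftrightarrow> (\<forall>e\<in>G. e \<subseteq> Alph \<and> card e = 2)"

definition words :: "'a set \<Rightarrow> nat \<Rightarrow> 'a list set" where
  "words Alph n = {x. set x \<subseteq> Alph \<and> length x = n}"

definition distinguishable :: "'a set set \<Rightarrow> 'a list \<Rightarrow> 'a list \<Rightarrow> bool" where
  "distinguishable G x y \<longleftrightarrow>
     (\<exists>t < min (length x) (length y). x ! t \<noteq> y ! t \<and> {x ! t, y ! t} \<notin> G)"

text \<open>Feasible vector \<open>(m 1, ..., m r)\<close> for length n; users indexed by \<open>{1..r}\<close>,
  message sets \<open>[m i]\<close> represented as \<open>{..<m i}\<close>.\<close>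
definition feasible_vector ::
  "'a set \<Rightarrow> nat \<Rightarrow> (nat \<Rightarrow> 'a set set) \<Rightarrow> nat \<Rightarrow> (nat \<Rightarrow> nat) \<Rightarrow> bool" where
  "feasible_vector Alph r Gs n m \<longleftrightarrow>
     (\<forall>i\<in>{1..r}. m i \<ge> 1) \<and>
     (\<exists>E :: (nat \<Rightarrow> nat) \<Rightarrow> 'a list.
        (\<forall>a \<in> PiE {1..r} (\<lambda>i. {..<m i}). E a \<in> words Alph n) \<and>
        (\<forall>i\<in>{1..r}. \<forall>a \<in> PiE {1..r} (\<lambda>i. {..<m i}). \<forall>a' \<in> PiE {1..r} (\<lambda>i. {..<m i}).
            a i \<noteq> a' i \<longrightarrow> distinguishable (Gs i) (E a) (E a')))"

definition feasible_rate ::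
  "'a set \<Rightarrow> nat \<Rightarrow> (nat \<Rightarrow> 'a set set) \<Rightarrow> (nat \<Rightarrow> real) \<Rightarrow> bool" where
  "feasible_rate Alph r Gs R \<longleftrightarrow>
     (\<exists>(N :: nat \<Rightarrow> nat) (M :: nat \<Rightarrow> nat \<Rightarrow> nat).
        filterlim N at_top sequentially \<and>
        (\<forall>j. feasible_vector Alph r Gs (N j) (M j)) \<and>
        (\<forall>i\<in>{1..r}. (\<lambda>j. log 2 (real (M j i)) / real (N j)) \<longlonglongrightarrow> R i))"

end

theory Submission
  imports Defs
begin

lemma powr_cvx:
  fixes p x y t :: real
  assumes "p \<ge> 1" "0 \<le> x" "0 \<le> y" "0 \<le> t" "t \<le> 1"
  shows "((1-t)*x + t*y) powr p \<le> (1-t) * x powr p + t * y powr p"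
proof (cases "x > 0 \<and> y > 0")
  case True
  then show ?thesis using convex_onD[OF powr_convex[OF assms(1)], of t x y] assms by auto
next
  case False
  have tp: "s powr p \<le> s" if "0 \<le> s" "s \<le> 1" for s :: real
  proof (cases "s = 0")
    case False
    then have "s powr p \<le> s powr 1" using that assms(1)
      by (intro powr_mono') auto
    then show ?thesis using that by simp
  qed (use assms in simp)
  show ?thesis
  proof (cases "x = 0")
    case True
    have "(t*y) powr p = t powr p * y powr p" using assms by (simp add: powr_mult)
    also have "\<dots> \<le> t * y powr p" using tp[of t] assms by (intro mult_right_mono) auto
    finally show ?thesis using True assms by simp
  next
    case xn: False
    then have y0: "y = 0" using False assms by auto
    have "((1-t)*x) powr p = (1-t) powr p * x powr p" using assms by (simp add: powr_mult)
    also have "\<dots> \<le> (1-t) * x powr p" using tp[of "1-t"] assms by (intro mult_right_mono) auto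
    finally show ?thesis using y0 assms by simp
  qed
qed

lemma key_num:
  fixes u :: "nat \<Rightarrow> real" and d k :: nat and g \<mu> :: real
  assumes d1: "1 \<le> d" and dk: "d \<le> k" and g1: "g \<ge> 1" and dg: "real d powr g = real k"
    and mu0: "0 \<le> \<mu>" and mu: "\<And>c. c < d \<Longrightarrow> \<mu> \<le> u c"
  shows "(\<Sum>c<d. u c powr g) + (real k - real d) * \<mu> powr g \<le> (\<Sum>c<d. u c) powr g"
proof -
  define V where "V = (\<Sum>c<d. u c - \<mu>)"
  have V0: "V \<ge> 0" unfolding V_def using mu by (intro sum_nonneg) auto
  have uS: "(\<Sum>c<d. u c) = real d * \<mu> + V" unfolding V_def by (simp add: sum_subtractf)
  have step1: "(\<Sum>c<d. u c powr g) \<le> (\<mu> + V) powr g + (real d - 1) * \<mu> powr g"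
  proof (cases "V = 0")
    case True
    then have "\<forall>c\<in>{..<d}. u c - \<mu> = 0"
      using sum_nonneg_eq_0_iff[of "{..<d}" "\<lambda>c. u c - \<mu>"] mu unfolding V_def by auto
    then have "(\<Sum>c<d. u c powr g) = (\<Sum>c<d. \<mu> powr g)" by (intro sum.cong) auto
    then show ?thesis using True d1 by (simp add: algebra_simps)
  next
    case False
    then have Vp: "V > 0" using V0 by auto
    define t where "t c = (u c - \<mu>) / V" for c
    have "u c powr g \<le> (1 - t c) * \<mu> powr g + t c * (\<mu> + V) powr g" if "c < d" for c
    proof -
      have "u c = (1 - t c) * \<mu> + t c * (\<mu> + V)" using Vp unfolding t_def by (simp add: field_simps)
      moreover have "t c \<ge> 0" using mu[OF that] Vp unfolding t_def by auto
      moreover have "t c \<le> 1"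
      proof -
        have "u c - \<mu> \<le> V" unfolding V_def
          using member_le_sum[of c "{..<d}" "\<lambda>c. u c - \<mu>"] mu that by auto
        then show ?thesis using Vp unfolding t_def by auto
      qed
      ultimately show ?thesis using powr_cvx[OF g1 mu0, of "\<mu> + V" "t c"] V0 mu0 by simp
    qed
    then have "(\<Sum>c<d. u c powr g) \<le> (\<Sum>c<d. (1 - t c) * \<mu> powr g + t c * (\<mu> + V) powr g)"
      by (intro sum_mono) auto
    also have "\<dots> = (real d - (\<Sum>c<d. t c)) * \<mu> powr g + (\<Sum>c<d. t c) * (\<mu> + V) powr g"
      by (simp add: sum.distrib sum_distrib_right sum_subtractf left_diff_distrib)
    also have "(\<Sum>c<d. t c) = 1" unfolding t_def using Vp
      by (simp add: sum_divide_distrib[symmetric] V_def[symmetric])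
    finally show ?thesis by simp
  qed
  define S where "S = real d * \<mu> + V"
  have S0: "S \<ge> 0" using V0 mu0 unfolding S_def by simp
  have step2: "(\<mu> + V) powr g + (real k - 1) * \<mu> powr g \<le> S powr g"
  proof (cases "S = 0")
    case True
    then have "\<mu> = 0" "V = 0" using V0 mu0 d1 unfolding S_def
      by (smt (verit) mult_nonneg_nonneg of_nat_0_le_iff of_nat_1 of_nat_mono mult_le_cancel_right1)+
    then show ?thesis using True by simp
  next
    case False
    then have Sp: "S > 0" using S0 by auto
    define s where "s = real d * \<mu> / S"
    have s0: "0 \<le> s" and s1: "s \<le> 1" unfolding s_def using Sp mu0 V0 by (auto simp: S_def)
    have dp: "real d > 0" using d1 by simp
    have sS: "s * S = real d * \<mu>" unfolding s_def using Sp by simp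
    have "(1 - s) * S + s * (S / real d) = S - s * S + (s * S) / real d" by (simp add: algebra_simps)
    also have "\<dots> = \<mu> + V" using sS dp unfolding S_def by simp
    finally have e1: "\<mu> + V = (1 - s) * S + s * (S / real d)" by simp
    have e2: "\<mu> = (1 - s) * 0 + s * (S / real d)"
      unfolding s_def using Sp dp by (simp add: field_simps)
    have gp: "g > 0" using g1 by simp
    have SdS: "real k * (S / real d) powr g = S powr g"
      using dp dg dk d1 by (simp add: powr_divide)
    have A: "(\<mu> + V) powr g \<le> (1 - s) * S powr g + s * (S / real d) powr g"
      unfolding e1 using powr_cvx[OF g1 S0, of "S / real d" s] s0 s1 S0 dp by simp
    have B: "\<mu> powr g \<le> s * (S / real d) powr g"
      using powr_cvx[OF g1 order_refl, of "S / real d" s] s0 s1 S0 dp gp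
      by (subst e2) simp
    have k1: "real k - 1 \<ge> 0" using d1 dk by simp
    have "(\<mu> + V) powr g + (real k - 1) * \<mu> powr g
        \<le> (1 - s) * S powr g + s * (S / real d) powr g + (real k - 1) * (s * (S / real d) powr g)"
      using A mult_left_mono[OF B k1] by simp
    also have "\<dots> = (1 - s) * S powr g + s * (real k * (S / real d) powr g)"
      by (simp add: algebra_simps)
    also have "\<dots> = S powr g" using SdS by (simp add: algebra_simps)
    finally show ?thesis .
  qed
  show ?thesis using step1 step2 uS unfolding S_def by (simp add: algebra_simps)
qed


definition cyl :: "nat \<Rightarrow> nat list \<Rightarrow> nat list set" where
  "cyl d x = {w. length w = length x \<and> (\<forall>t<length x. w!t < d \<and> (x!t < d \<longrightarrow> w!t = x!t))}"

lemma cyl_Cons: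
  assumes "w < d" "c < d \<Longrightarrow> w = c" "ws \<in> cyl d x"
  shows "w # ws \<in> cyl d (c # x)"
  using assms unfolding cyl_def by (auto simp: All_less_Suc2)

lemma cyl_Nil: "cyl d [] = {[]}" unfolding cyl_def by auto

lemma finite_F: "finite {x \<in> words {..<(k::nat)} n. P x}"
proof (rule finite_subset[of _ "words {..<k} n"])
  show "finite (words {..<k} n)" unfolding words_def by (rule finite_lists_length_eq) simp
qed auto

lemma key_count:
  assumes d1: "1 \<le> d" and dk: "d \<le> k" and g1: "g \<ge> 1" and dg: "real d powr g = real k"
  shows "finite U \<Longrightarrow> real (card {x \<in> words {..<k} n. cyl d x \<subseteq> U}) \<le> real (card U) powr g"
proof (induction n arbitrary: U)
  case 0
  have w0: "words {..<k} 0 = {[]}" unfolding words_def by auto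
  have F: "{x \<in> words {..<k} 0. cyl d x \<subseteq> U} = (if [] \<in> U then {[]} else {})"
    unfolding w0 by (auto simp: cyl_Nil)
  show ?case
  proof (cases "[] \<in> U")
    case True
    then have "card U \<ge> 1" using 0 by (metis One_nat_def Suc_leI card_gt_0_iff empty_iff)
    then have "1 \<le> real (card U) powr g" using g1 by (intro ge_one_powr_ge_zero) auto
    then show ?thesis using F True by simp
  next
    case False
    then have "{x \<in> words {..<k} 0. cyl d x \<subseteq> U} = {}" using F by presburger
    then show ?thesis by (simp only: card.empty of_nat_0) simp
  qed
next
  case (Suc n)
  define F where "F V = {x \<in> words {..<k} n. cyl d x \<subseteq> V}" for V
  define Uc where "Uc c = Cons c -` U" for c
  define I where "I = (\<Inter>c\<in>{..<d}. Uc c)"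
  have finUc: "finite (Uc c)" for c unfolding Uc_def using Suc.prems by (intro finite_vimageI) auto
  have finI: "finite I" unfolding I_def using d1 finUc by (intro finite_INT) (auto intro: exI[of _ 0])
  define G where "G c = (if c < d then F (Uc c) else F I)" for c
  have sub: "{x \<in> words {..<k} (Suc n). cyl d x \<subseteq> U} \<subseteq> (\<Union>c\<in>{..<k}. Cons c ` G c)"
  proof
    fix x assume x: "x \<in> {x \<in> words {..<k} (Suc n). cyl d x \<subseteq> U}"
    then obtain c x' where xc: "x = c # x'" unfolding words_def by (cases x) auto
    have ck: "c < k" and x'w: "x' \<in> words {..<k} n" using x xc unfolding words_def by auto
    have cU: "cyl d (c # x') \<subseteq> U" using x xc by auto
    have "x' \<in> G c"
    proof (cases "c < d")
      case True
      have "cyl d x' \<subseteq> Uc c" unfolding Uc_def using cyl_Cons[of c d c] True cU by auto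
      then show ?thesis using True x'w unfolding G_def F_def by auto
    next
      case False
      have "cyl d x' \<subseteq> I" unfolding I_def Uc_def using cyl_Cons[of _ d c _ x'] False cU by blast
      then show ?thesis using False x'w unfolding G_def F_def by auto
    qed
    then show "x \<in> (\<Union>c\<in>{..<k}. Cons c ` G c)" using xc ck by auto
  qed
  have "card {x \<in> words {..<k} (Suc n). cyl d x \<subseteq> U} \<le> card (\<Union>c\<in>{..<k}. Cons c ` G c)"
    by (intro card_mono sub) (auto simp: G_def F_def finite_F)
  also have "\<dots> \<le> (\<Sum>c<k. card (Cons c ` G c))" by (rule card_UN_le) auto
  also have "\<dots> \<le> (\<Sum>c<k. card (G c))" by (intro sum_mono card_image_le) (auto simp: G_def F_def finite_F)
  also have "\<dots> = (\<Sum>c<d. card (G c)) + (\<Sum>c\<in>{d..<k}. card (G c))"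
  proof -
    have eq: "{..<k} = {..<d} \<union> {d..<k}" using dk by auto
    show ?thesis by (subst eq) (rule sum.union_disjoint; auto)
  qed
  also have "\<dots> = (\<Sum>c<d. card (F (Uc c))) + (k - d) * card (F I)"
    unfolding G_def by simp
  finally have c0: "card {x \<in> words {..<k} (Suc n). cyl d x \<subseteq> U}
      \<le> (\<Sum>c<d. card (F (Uc c))) + (k - d) * card (F I)" .
  have "real (card {x \<in> words {..<k} (Suc n). cyl d x \<subseteq> U})
      \<le> real ((\<Sum>c<d. card (F (Uc c))) + (k - d) * card (F I))"
    using c0 by (rule of_nat_mono)
  also have "\<dots> = (\<Sum>c<d. real (card (F (Uc c)))) + (real k - real d) * real (card (F I))"
    using dk by (simp add: of_nat_diff)
  also have "\<dots> \<le> (\<Sum>c<d. real (card (Uc c)) powr g) + (real k - real d) * real (card I) powr g"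
    using Suc.IH[OF finUc] Suc.IH[OF finI] dk unfolding F_def
    by (intro add_mono sum_mono mult_left_mono) auto
  also have "\<dots> \<le> (\<Sum>c<d. real (card (Uc c))) powr g"
  proof (rule key_num[OF d1 dk g1 dg])
    fix c assume "c < d"
    then have "I \<subseteq> Uc c" unfolding I_def by auto
    then show "real (card I) \<le> real (card (Uc c))" using finUc by (simp add: card_mono)
  qed simp
  also have "\<dots> \<le> real (card U) powr g"
  proof -
    have "(\<Sum>c<d. card (Uc c)) = (\<Sum>c<d. card (Cons c ` Uc c))"
      by (intro sum.cong refl) (simp add: card_image)
    also have "\<dots> = card (\<Union>c\<in>{..<d}. Cons c ` Uc c)"
      by (rule card_UN_disjoint[symmetric]) (auto simp: finUc)
    also have "\<dots> \<le> card U" using Suc.prems by (intro card_mono) (auto simp: Uc_def)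
    finally have "real (\<Sum>c<d. card (Uc c)) \<le> real (card U)" by (rule of_nat_mono)
    then have "(\<Sum>c<d. real (card (Uc c))) \<le> real (card U)" by (simp only: of_nat_sum)
    then show ?thesis using g1 by (intro powr_mono2) (auto intro: sum_nonneg)
  qed
  finally show ?case .
qed


lemma dist_neq: "distinguishable G x y \<Longrightarrow> x \<noteq> y"
  unfolding distinguishable_def by auto

lemma cyl_words: "length x = n \<Longrightarrow> cyl d x \<subseteq> words {..<d} n"
  unfolding cyl_def words_def by (auto simp: in_set_conv_nth)

lemma per_length:
  fixes d k r n :: nat and Gs :: "nat \<Rightarrow> nat set set" and m :: "nat \<Rightarrow> nat" and g :: real
  assumes d2: "2 \<le> d" and dk: "d \<le> k" and r1: "1 \<le> r"
    and G1: "Gs 1 = {{a, b} | a b. a \<in> {..<k} \<and> b \<in> {..<k} - {..<d} \<and> a \<noteq> b}"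
    and fv: "feasible_vector {..<k} r Gs n m"
    and g1: "g \<ge> 1" and dg: "real d powr g = real k"
  shows "real (\<Prod>i\<in>{2..r}. m i) \<le> (real d ^ n / real (m 1)) powr g"
proof -
  define A where "A = PiE {1..r} (\<lambda>i. {..<m i})"
  have fv': "(\<forall>i\<in>{1..r}. m i \<ge> 1) \<and> (\<exists>E :: (nat \<Rightarrow> nat) \<Rightarrow> nat list. (\<forall>a\<in>A. E a \<in> words {..<k} n) \<and>
     (\<forall>i\<in>{1..r}. \<forall>a\<in>A. \<forall>a'\<in>A. a i \<noteq> a' i \<longrightarrow> distinguishable (Gs i) (E a) (E a')))"
    using fv unfolding feasible_vector_def A_def .
  then have mpos: "\<And>i. i \<in> {1..r} \<Longrightarrow> m i \<ge> 1" by blast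
  from fv' obtain E :: "(nat \<Rightarrow> nat) \<Rightarrow> nat list" where E1: "\<forall>a\<in>A. E a \<in> words {..<k} n"
    and E2: "\<forall>i\<in>{1..r}. \<forall>a\<in>A. \<forall>a'\<in>A. a i \<noteq> a' i \<longrightarrow> distinguishable (Gs i) (E a) (E a')"
    by (elim conjE exE)
  have Ew: "\<And>a. a \<in> A \<Longrightarrow> E a \<in> words {..<k} n" using E1 by blast
  have Ed: "\<And>i a a'. i \<in> {1..r} \<Longrightarrow> a \<in> A \<Longrightarrow> a' \<in> A \<Longrightarrow> a i \<noteq> a' i
               \<Longrightarrow> distinguishable (Gs i) (E a) (E a')" using E2 by blast
  define Cd where "Cd a1 = E ` {a \<in> A. a 1 = a1}" for a1
  define Uu where "Uu a1 = (\<Union>x\<in>Cd a1. cyl d x)" for a1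
  have Uuw: "Uu a1 \<subseteq> words {..<d} n" for a1
    unfolding Uu_def Cd_def using Ew cyl_words unfolding words_def by blast
  have finw: "finite (words {..<d} n)" unfolding words_def by (rule finite_lists_length_eq) simp
  have finUu: "finite (Uu a1)" for a1 using Uuw finw finite_subset by blast
  have disj: "Uu a1 \<inter> Uu a1' = {}" if "a1 \<noteq> a1'" for a1 a1'
  proof (rule ccontr)
    assume "Uu a1 \<inter> Uu a1' \<noteq> {}"
    then obtain w a a' where a: "a \<in> A" "a 1 = a1" and a': "a' \<in> A" "a' 1 = a1'"
      and w: "w \<in> cyl d (E a)" "w \<in> cyl d (E a')"
      unfolding Uu_def Cd_def by blast
    have "distinguishable (Gs 1) (E a) (E a')" using Ed[of 1 a a'] a a' that r1 by auto
    then obtain t where t: "t < length (E a)" "t < length (E a')" "E a ! t \<noteq> E a' ! t"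
      and ne: "{E a ! t, E a' ! t} \<notin> Gs 1"
      unfolding distinguishable_def by auto
    have "E a ! t \<in> set (E a)" "E a' ! t \<in> set (E a')" using t by (auto intro!: nth_mem)
    then have k1: "E a ! t < k" "E a' ! t < k" using Ew[OF a(1)] Ew[OF a'(1)]
      unfolding words_def by auto
    have mem: "{p, q} \<in> Gs 1" if "p < k" "q < k" "d \<le> q" "p \<noteq> q" for p q
    proof -
      have "p \<in> {..<k}" "q \<in> {..<k} - {..<d}" using that by auto
      then show ?thesis unfolding G1 using that(4) by blast
    qed
    have lt: "E a ! t < d \<and> E a' ! t < d"
    proof (rule ccontr)
      assume "\<not> (E a ! t < d \<and> E a' ! t < d)"
      then consider "d \<le> E a' ! t" | "d \<le> E a ! t" by linarith
      then have "{E a ! t, E a' ! t} \<in> Gs 1"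
      proof cases
        case 1 then show ?thesis using mem k1 t(3) by blast
      next
        case 2 then show ?thesis using mem[of "E a' ! t" "E a ! t"] k1 t(3) by (simp add: insert_commute)
      qed
      then show False using ne by simp
    qed
    have "w ! t = E a ! t" "w ! t = E a' ! t" using w t lt unfolding cyl_def by auto
    then show False using t(3) by simp
  qed
  have "(\<Sum>a1<m 1. card (Uu a1)) = card (\<Union>a1\<in>{..<m 1}. Uu a1)"
    by (rule card_UN_disjoint[symmetric]) (auto simp: finUu disj)
  also have "\<dots> \<le> card (words {..<d} n)" using Uuw finw by (intro card_mono) auto
  also have "\<dots> = d ^ n" unfolding words_def by (simp add: card_lists_length_eq)
  finally have sumU: "(\<Sum>a1<m 1. card (Uu a1)) \<le> d ^ n" .
  have m1: "m 1 \<ge> 1" using mpos r1 by auto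
  define v where "v = Min ((\<lambda>a1. card (Uu a1)) ` {..<m 1})"
  have "v \<in> (\<lambda>a1. card (Uu a1)) ` {..<m 1}" unfolding v_def using m1 by (intro Min_in) (auto simp: lessThan_empty_iff)
  then obtain a1 where a1: "a1 < m 1" "card (Uu a1) = v" by auto
  have vle: "v \<le> card (Uu b)" if "b < m 1" for b unfolding v_def using that by (intro Min_le) auto
  have "m 1 * v \<le> (\<Sum>a1<m 1. card (Uu a1))"
    using sum_bounded_below[of "{..<m 1}" v "\<lambda>a1. card (Uu a1)"] vle by auto
  then have "m 1 * v \<le> d ^ n" using sumU by linarith
  then have "real (m 1) * real v \<le> real d ^ n" by (metis of_nat_le_iff of_nat_mult of_nat_power)
  then have vb: "real v \<le> real d ^ n / real (m 1)" using m1 by (simp add: field_simps)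
  define B where "B = PiE {2..r} (\<lambda>i. {..<m i})"
  define f where "f b = E (b(1 := a1))" for b
  have bA: "b(1 := a1) \<in> A" if "b \<in> B" for b
    using that a1 r1 unfolding A_def B_def by (auto simp: PiE_iff extensional_def)
  have inj: "inj_on f B"
  proof
    fix b b' assume b: "b \<in> B" and b': "b' \<in> B" and eq: "f b = f b'"
    show "b = b'"
    proof (rule ccontr)
      assume "b \<noteq> b'"
      then obtain i where i: "i \<in> {2..r}" "b i \<noteq> b' i"
        using b b' unfolding B_def by (meson PiE_ext)
      then have "distinguishable (Gs i) (E (b(1 := a1))) (E (b'(1 := a1)))"
        using Ed[of i "b(1 := a1)" "b'(1 := a1)"] bA b b' by auto
      then show False using eq dist_neq unfolding f_def by metis
    qed
  qed
  have fB: "f ` B \<subseteq> {x \<in> words {..<k} n. cyl d x \<subseteq> Uu a1}"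
  proof
    fix x assume "x \<in> f ` B"
    then obtain b where b: "b \<in> B" "x = f b" by auto
    have "x \<in> Cd a1" unfolding Cd_def f_def b(2) using bA[OF b(1)] by auto
    then show "x \<in> {x \<in> words {..<k} n. cyl d x \<subseteq> Uu a1}"
      unfolding Uu_def Cd_def using Ew by auto
  qed
  have "card B \<le> card {x \<in> words {..<k} n. cyl d x \<subseteq> Uu a1}"
    by (rule card_inj_on_le[OF inj fB finite_F])
  moreover have "card B = (\<Prod>i\<in>{2..r}. m i)" unfolding B_def by (simp add: card_PiE)
  ultimately have "(\<Prod>i\<in>{2..r}. m i) \<le> card {x \<in> words {..<k} n. cyl d x \<subseteq> Uu a1}"
    by simp
  then have "real (\<Prod>i\<in>{2..r}. m i) \<le> real (card {x \<in> words {..<k} n. cyl d x \<subseteq> Uu a1})"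
    by (rule of_nat_mono)
  also have "\<dots> \<le> real (card (Uu a1)) powr g"
    using key_count[of d k g "Uu a1" n] d2 dk g1 dg finUu by auto
  also have "\<dots> \<le> (real d ^ n / real (m 1)) powr g"
    using a1 vb g1 by (intro powr_mono2) auto
  finally show ?thesis .
qed


lemma log_prod_nat:
  assumes "finite I" "\<And>i. i \<in> I \<Longrightarrow> f i \<ge> (1::nat)"
  shows "log 2 (real (\<Prod>i\<in>I. f i)) = (\<Sum>i\<in>I. log 2 (real (f i)))"
proof -
  have "ln (\<Prod>i\<in>I. real (f i)) = (\<Sum>i\<in>I. ln (real (f i)))"
    using assms by (intro ln_prod) (auto simp: Suc_le_eq)
  then show ?thesis unfolding log_def by (simp add: sum_divide_distrib)
qed

theorem corollary13:
  fixes d k r :: nat and Gs :: "nat \<Rightarrow> nat set set" and R :: "nat \<Rightarrow> real" and \<alpha> :: real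
  assumes "2 \<le> d" and "d \<le> k" and "2 \<le> r"
    and "Gs 1 = {{a, b} | a b. a \<in> {..<k} \<and> b \<in> {..<k} - {..<d} \<and> a \<noteq> b}"
    and "\<forall>i\<in>{2..r}. is_graph_on {..<k} (Gs i)"
    and "\<alpha> \<in> {0..1}"
    and "R 1 = \<alpha> * log 2 (real d)"
    and "feasible_rate {..<k} r Gs R"
  shows "(\<Sum>i=2..r. R i) \<le> (1 - \<alpha>) * log 2 (real k)"
proof -
  note d2 = assms(1) and dk = assms(2) and r2 = assms(3) and G1 = assms(4) and R1 = assms(7)
  obtain N :: "nat \<Rightarrow> nat" and M :: "nat \<Rightarrow> nat \<Rightarrow> nat" where
    Nlim: "filterlim N at_top sequentially" and
    fvj: "\<And>j. feasible_vector {..<k} r Gs (N j) (M j)" and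
    lims: "\<And>i. i \<in> {1..r} \<Longrightarrow> (\<lambda>j. log 2 (real (M j i)) / real (N j)) \<longlonglongrightarrow> R i"
    using assms(8) unfolding feasible_rate_def by blast
  define g where "g = log (real d) (real k)"
  have dpos: "real d > 1" using d2 by simp
  have kpos: "real k > 0" using d2 dk by simp
  have dg: "real d powr g = real k" unfolding g_def using dpos kpos by (intro powr_log_cancel) auto
  have g1: "g \<ge> 1"
  proof -
    have "log (real d) (real d) \<le> log (real d) (real k)" using dpos dk by (subst log_le_cancel_iff) auto
    then show ?thesis unfolding g_def using dpos by simp
  qed
  have glog: "g * log 2 (real d) = log 2 (real k)"
    unfolding g_def log_def using dpos by (simp add: field_simps)
  have mpos: "\<And>j i. i \<in> {1..r} \<Longrightarrow> M j i \<ge> 1" using fvj unfolding feasible_vector_def by blast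
  have ineq: "(\<Sum>i\<in>{2..r}. log 2 (real (M j i)) / real (N j))
      \<le> log 2 (real k) - g * (log 2 (real (M j 1)) / real (N j))" if Npos: "N j \<ge> 1" for j
  proof -
    have m1: "real (M j 1) > 0" using mpos[of 1 j] r2 by auto
    have P: "real (\<Prod>i\<in>{2..r}. M j i) \<le> (real d ^ N j / real (M j 1)) powr g"
      using per_length[OF d2 dk _ G1 fvj g1 dg] r2 by auto
    have Ppos: "real (\<Prod>i\<in>{2..r}. M j i) > 0"
    proof -
      have "0 < (\<Prod>i\<in>{2..r}. M j i)" using mpos by (intro prod_pos) (auto simp: Suc_le_eq)
      then show ?thesis by (simp only: of_nat_0_less_iff)
    qed
    have "log 2 (real (\<Prod>i\<in>{2..r}. M j i)) \<le> log 2 ((real d ^ N j / real (M j 1)) powr g)"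
      using P Ppos m1 dpos by (subst log_le_cancel_iff) auto
    also have "\<dots> = g * (real (N j) * log 2 (real d) - log 2 (real (M j 1)))"
      using m1 dpos by (simp add: log_powr log_divide log_nat_power)
    also have "\<dots> = real (N j) * log 2 (real k) - g * log 2 (real (M j 1))"
      using glog by (simp add: algebra_simps)
    finally have A: "(\<Sum>i\<in>{2..r}. log 2 (real (M j i))) \<le> real (N j) * log 2 (real k) - g * log 2 (real (M j 1))"
      using log_prod_nat[of "{2..r}" "M j"] mpos by auto
    have Np: "real (N j) > 0" using Npos by simp
    have "(\<Sum>i\<in>{2..r}. log 2 (real (M j i)) / real (N j)) = (\<Sum>i\<in>{2..r}. log 2 (real (M j i))) / real (N j)"
      by (simp add: sum_divide_distrib)
    also have "\<dots> \<le> (real (N j) * log 2 (real k) - g * log 2 (real (M j 1))) / real (N j)"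
      using A Np by (intro divide_right_mono) auto
    also have "\<dots> = log 2 (real k) - g * (log 2 (real (M j 1)) / real (N j))"
      using Np by (simp add: field_simps)
    finally show ?thesis .
  qed
  have ev: "eventually (\<lambda>j. N j \<ge> 1) sequentially"
    using Nlim unfolding filterlim_at_top by blast
  have L1: "(\<lambda>j. \<Sum>i\<in>{2..r}. log 2 (real (M j i)) / real (N j)) \<longlonglongrightarrow> (\<Sum>i\<in>{2..r}. R i)"
    by (intro tendsto_sum lims) auto
  have L2: "(\<lambda>j. log 2 (real k) - g * (log 2 (real (M j 1)) / real (N j))) \<longlonglongrightarrow> log 2 (real k) - g * R 1"
    using r2 by (intro tendsto_intros lims) auto
  have "(\<Sum>i\<in>{2..r}. R i) \<le> log 2 (real k) - g * R 1"
    by (rule tendsto_le[OF trivial_limit_sequentially L2 L1]) (use ev ineq in \<open>auto elim: eventually_mono\<close>)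
  also have "\<dots> = (1 - \<alpha>) * log 2 (real k)"
    unfolding R1 using glog by (simp add: algebra_simps)
  finally show ?thesis .
qed

end
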